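(* For positive integers $n$, \[ A'(n,4,4) = \begin{cases} 1,&\text{if } n\leq 3, \\ 2,&\text{if } n\in\{4,5\}, \\ 4,&\text{if } n=6, \\ 8,&\text{if } n=7, \\ 19,&\text{if } n=9. \end{cases} \]
   Context: $A'(n,4,4)$ denotes the maximum size of a nonempty set $S\subseteq \mathbb{F}_2^n$ such that every element of $S$ has Hamming weight at most $4$ and any two distinct elements of $S$ are at Hamming distance at least $4$. *)

theory Defs
  imports Main
begin

text \<open>Elements of F_2^n are modelled as bit vectors x :: nat => bool that vanish
  outside the coordinate range {0..<n}.\<close>

definition F2vec :: "nat \<Rightarrow> (nat \<Rightarrow> bool) set" where
  "F2vec n = {x. \<forall>i. n \<le> i \<longrightarrow> \<not> x i}"

definition hamming_weight :: "nat \<Rightarrow> (nat \<Rightarrow> bool) \<Rightarrow> nat" where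
  "hamming_weight n x = card {i. i < n \<and> x i}"

definition hamming_dist :: "nat \<Rightarrow> (nat \<Rightarrow> bool) \<Rightarrow> (nat \<Rightarrow> bool) \<Rightarrow> nat" where
  "hamming_dist n x y = card {i. i < n \<and> x i \<noteq> y i}"

definition admissible_code :: "nat \<Rightarrow> nat \<Rightarrow> nat \<Rightarrow> (nat \<Rightarrow> bool) set \<Rightarrow> bool" where
  "admissible_code n d w S \<longleftrightarrow> S \<noteq> {} \<and> S \<subseteq> F2vec n \<and>
     (\<forall>x\<in>S. hamming_weight n x \<le> w) \<and>
     (\<forall>x\<in>S. \<forall>y\<in>S. x \<noteq> y \<longrightarrow> d \<le> hamming_dist n x y)"

definition A' :: "nat \<Rightarrow> nat \<Rightarrow> nat \<Rightarrow> nat" where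
  "A' n d w = Max {card S | S. admissible_code n d w S}"

end

theory Submission
  imports Defs
begin



lemma sd_eq:
  assumes "finite c" "finite d"
  shows "card ((c-d)\<union>(d-c)) + 2 * card (c\<inter>d) = card c + card d"
proof -
  have "card ((c-d)\<union>(d-c)) = card (c-d) + card (d-c)"
    by (rule card_Un_disjoint) (use assms in auto)
  moreover have "card (c-d) = card c - card (c\<inter>d)" "card (c\<inter>d) \<le> card c"
    using assms by (simp_all add: card_Diff_subset_Int card_mono)
  moreover have "card (d-c) = card d - card (c\<inter>d)" "card (c\<inter>d) \<le> card d"
    using assms by (simp_all add: card_Diff_subset_Int card_mono Int_commute)
  ultimately show ?thesis by simp
qed

lemma disj_pairs_bound:
  assumes "finite R" "finite W" "\<forall>c\<in>W. c - e \<subseteq> R" "\<forall>c\<in>W. card (c - e) = 2"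
    "\<forall>c\<in>W. \<forall>d\<in>W. c\<noteq>d \<longrightarrow> (c-e) \<inter> (d-e) = {}"
  shows "2 * card W \<le> card R"
proof -
  have fin: "\<forall>c\<in>W. finite (c - e)" using assms(4) by (metis card.infinite zero_neq_numeral)
  have "card (\<Union>c\<in>W. c - e) = (\<Sum>c\<in>W. card (c - e))"
    by (rule card_UN_disjoint) (use assms fin in auto)
  also have "\<dots> = 2 * card W" using assms(4) by simp
  finally have "card (\<Union>c\<in>W. c - e) = 2 * card W" .
  moreover have "card (\<Union>c\<in>W. c - e) \<le> card R"
    by (rule card_mono) (use assms in auto)
  ultimately show ?thesis by simp
qed

lemma pack9:
  fixes F :: "nat set set"
  assumes sub: "\<forall>c\<in>F. c \<subseteq> {..<9}" and wt: "\<forall>c\<in>F. card c \<le> 4"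
    and dist: "\<forall>c\<in>F. \<forall>d\<in>F. c \<noteq> d \<longrightarrow> 4 \<le> card ((c-d) \<union> (d-c))"
  shows "card F \<le> 19"
proof -
  have finc: "\<And>c. c \<in> F \<Longrightarrow> finite c" using sub finite_subset by blast
  have finF: "finite F"
  proof (rule finite_subset)
    show "F \<subseteq> Pow {..<9}" using sub by blast
  qed simp
  have inter: "2 * card (c \<inter> d) + 4 \<le> card c + card d" if "c \<in> F" "d \<in> F" "c \<noteq> d" for c d
  proof -
    have "card ((c-d)\<union>(d-c)) + 2 * card (c\<inter>d) = card c + card d"
      using sd_eq finc that by blast
    moreover have "4 \<le> card ((c-d) \<union> (d-c))" using dist that by blast
    ultimately show ?thesis by linarith
  qed
  define L where "L = {c\<in>F. card c \<le> 1}"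
  define G where "G = {c\<in>F. 2 \<le> card c}"
  define D2 where "D2 = {c\<in>F. card c = 2}"
  define E where "E = {e. e \<subseteq> {..<(9::nat)} \<and> card e = 2}"
  define \<omega> :: "nat set \<Rightarrow> nat" where "\<omega> c = (if card c = 2 then 6 else if card c = 3 then 2 else 1)" for c
  define v where "v e = (\<Sum>c\<in>{c. c\<in>G \<and> e\<subseteq>c}. \<omega> c)" for e
  have finG: "finite G" "finite L" "finite D2" using finF by (simp_all add: G_def L_def D2_def)
  have finE: "finite E" unfolding E_def by (rule finite_subset[of _ "Pow {..<9}"]) auto
  have cardE: "card E = 36" unfolding E_def by (simp add: n_subsets choose_two)
  have cardF: "card F = card L + card G"
  proof -
    have "F = L \<union> G" "L \<inter> G = {}" by (auto simp: L_def G_def)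
    then show ?thesis using finG card_Un_disjoint by metis
  qed
  have L1: "card L \<le> 1"
  proof -
    have "\<forall>a\<in>L. \<forall>b\<in>L. a = b"
    proof (intro ballI, rule ccontr)
      fix a b assume "a \<in> L" "b \<in> L" "a \<noteq> b"
      then show False using inter[of a b] by (auto simp: L_def)
    qed
    then show ?thesis using card_le_Suc0_iff_eq finG by auto
  qed
  have L0: "L = {}" if D2ne: "D2 \<noteq> {}"
  proof (rule ccontr)
    assume "L \<noteq> {}"
    then obtain a where a: "a \<in> L" by blast
    obtain p where p: "p \<in> D2" using D2ne by blast
    have "a \<noteq> p" using a p by (auto simp: L_def D2_def)
    then show False using inter[of a p] a p by (auto simp: L_def D2_def)
  qed
  have swap: "6 * card G = (\<Sum>e\<in>E. v e)"
  proof -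
    have six: "(\<Sum>e\<in>{e. e\<in>E \<and> e\<subseteq>c}. \<omega> c) = 6" if c: "c \<in> G" for c
    proof -
      have "{e. e\<in>E \<and> e\<subseteq>c} = {B. B \<subseteq> c \<and> card B = 2}"
        using c sub by (auto simp: E_def G_def)
      then have cd: "card {e. e\<in>E \<and> e\<subseteq>c} = card c choose 2"
        using n_subsets[of c 2] finc[of c] c by (simp add: G_def)
      have "card c = 2 \<or> card c = 3 \<or> card c = 4" using c wt by (auto simp: G_def)
      then show ?thesis using cd by (auto simp: \<omega>_def choose_two)
    qed
    have "6 * card G = (\<Sum>c\<in>G. (\<Sum>e\<in>{e. e\<in>E \<and> e\<subseteq>c}. \<omega> c))"
      using six by simp
    also have "\<dots> = (\<Sum>e\<in>E. (\<Sum>c\<in>{c. c\<in>G \<and> e\<subseteq>c}. \<omega> c))"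
      by (rule sum.swap_restrict) (use finG finE in auto)
    finally show ?thesis by (simp add: v_def)
  qed
  have V1: "v e = 6" if "e \<in> E" "e \<in> F" for e
  proof -
    have "{c. c\<in>G \<and> e\<subseteq>c} = {e}"
    proof (intro equalityI subsetI)
      fix c assume c: "c \<in> {c. c\<in>G \<and> e\<subseteq>c}"
      show "c \<in> {e}"
      proof (rule ccontr)
        assume "c \<notin> {e}"
        then have "2 * card (c \<inter> e) + 4 \<le> card c + card e" using inter c that by (auto simp: G_def)
        moreover have "c \<inter> e = e" using c by auto
        moreover have "card c \<le> 4" using c wt by (auto simp: G_def)
        moreover have "card e = 2" using that by (auto simp: E_def)
        ultimately show False by simp
      qed
    next
      fix c assume "c \<in> {e}"
      then show "c \<in> {c. c\<in>G \<and> e\<subseteq>c}" using that by (auto simp: G_def E_def)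
    qed
    then show ?thesis using that by (simp add: v_def \<omega>_def E_def)
  qed
  have VG: "v e \<le> max 2 (card R div 2)"
    if e: "e \<in> E" "e \<notin> F" and R: "finite R"
      and RR: "\<And>c. c \<in> G \<Longrightarrow> e \<subseteq> c \<Longrightarrow> card c = 4 \<Longrightarrow> c - e \<subseteq> R" for e R
  proof -
    define W where "W = {c. c\<in>G \<and> e\<subseteq>c}"
    have finW: "finite W" using finG by (simp add: W_def)
    have ce: "card e = 2" "finite e" using e by (auto simp: E_def finite_subset)
    have W34: "card c = 3 \<or> card c = 4" if "c \<in> W" for c
    proof -
      have "card c \<noteq> 2"
      proof
        assume "card c = 2"
        then have "e = c" using card_seteq[of c e] that ce finc by (auto simp: W_def G_def)
        then show False using that e by (auto simp: W_def G_def)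
      qed
      then show ?thesis using that wt by (auto simp: W_def G_def)
    qed
    show ?thesis
    proof (cases "\<exists>c\<in>W. card c = 3")
      case True
      then obtain c where c: "c \<in> W" "card c = 3" by blast
      have "W = {c}"
      proof (intro equalityI subsetI)
        fix d assume d: "d \<in> W"
        show "d \<in> {c}"
        proof (rule ccontr)
          assume "d \<notin> {c}"
          then have "c \<noteq> d" by auto
          moreover have "c \<in> F" "d \<in> F" using c d by (auto simp: W_def G_def)
          ultimately have "2 * card (c \<inter> d) + 4 \<le> card c + card d" using inter by blast
          moreover have "card e \<le> card (c \<inter> d)" using c d finc by (intro card_mono) (auto simp: W_def G_def)
          moreover have "card d \<le> 4" using d wt by (auto simp: W_def G_def)
          ultimately show False using c ce by simp
        qed
      qed (use c in auto)
      then show ?thesis using c by (simp add: v_def W_def[symmetric] \<omega>_def)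
    next
      case False
      then have W4: "\<forall>c\<in>W. card c = 4" using W34 by blast
      then have "v e = card W" by (simp add: v_def W_def[symmetric] \<omega>_def)
      moreover have "2 * card W \<le> card R"
      proof (rule disj_pairs_bound[OF R finW, of e])
        show "\<forall>c\<in>W. c - e \<subseteq> R" using RR W4 by (auto simp: W_def)
        show "\<forall>c\<in>W. card (c - e) = 2" using W4 ce by (auto simp: W_def card_Diff_subset)
        show "\<forall>c\<in>W. \<forall>d\<in>W. c \<noteq> d \<longrightarrow> (c - e) \<inter> (d - e) = {}"
        proof (intro ballI impI)
          fix c d assume c: "c \<in> W" and d: "d \<in> W" and cd: "c \<noteq> d"
          have "c \<in> F" "d \<in> F" using c d by (auto simp: W_def G_def)
          then have "2 * card (c \<inter> d) + 4 \<le> card c + card d" using inter cd by blast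
          then have le: "card (c \<inter> d) \<le> card e" using W4 c d ce by simp
          have "e \<subseteq> c \<inter> d" using c d by (auto simp: W_def)
          then have "e = c \<inter> d" using card_seteq[OF _ _ le] c finc by (auto simp: W_def G_def)
          then show "(c - e) \<inter> (d - e) = {}" by blast
        qed
      qed
      ultimately show ?thesis by simp
    qed
  qed
  have V2: "v e \<le> 3" if e: "e \<in> E" "e \<notin> F" for e
  proof -
    have es: "e \<subseteq> {..<9}" "card e = 2" using e by (auto simp: E_def)
    have "card ({..<9} - e) = 7" using card_Diff_subset[OF finite_subset[OF es(1)] es(1)] es by simp
    moreover have "v e \<le> max 2 (card ({..<9} - e) div 2)"
      by (rule VG[OF e]) (use sub in \<open>auto simp: G_def\<close>)
    ultimately show ?thesis by simp
  qed
  have bnd: "(\<Sum>e\<in>E. (if e \<in> F then 6 else 3)) = 108 + 3 * card D2"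
  proof -
    have ED: "E \<inter> F = D2" using sub by (auto simp: E_def D2_def)
    have "(\<Sum>e\<in>E. (if e \<in> F then 6 else 3::nat)) = (\<Sum>e\<in>E. 3 + (if e \<in> F then 3 else 0))"
      by (rule sum.cong) auto
    also have "\<dots> = 3 * card E + (\<Sum>e\<in>E. (if e \<in> F then 3 else 0))"
      by (simp add: sum.distrib)
    also have "(\<Sum>e\<in>E. (if e \<in> F then 3 else 0)) = (\<Sum>e\<in>E \<inter> F. 3::nat)"
      using sum.inter_restrict[OF finE, of "\<lambda>_. 3::nat" F] by simp
    finally show ?thesis using ED cardE by simp
  qed
  have sumb: "(\<Sum>e\<in>E. v e) \<le> (\<Sum>e\<in>E. (if e \<in> F then 6 else 3))"
    by (rule sum_mono) (use V1 V2 in auto)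
  have D2disj: "\<forall>p\<in>D2. \<forall>q\<in>D2. p \<noteq> q \<longrightarrow> p \<inter> q = {}"
  proof (intro ballI impI)
    fix p q assume p: "p \<in> D2" and q: "q \<in> D2" and pq: "p \<noteq> q"
    have "p \<in> F" "q \<in> F" using p q by (auto simp: D2_def)
    then have "2 * card (p \<inter> q) + 4 \<le> card p + card q" using inter pq by blast
    then have "card (p \<inter> q) = 0" using p q by (auto simp: D2_def)
    then show "p \<inter> q = {}" using finc p by (auto simp: D2_def)
  qed
  have a2: "2 * card D2 \<le> 9"
  proof -
    have "2 * card D2 \<le> card {..<(9::nat)}"
      by (rule disj_pairs_bound[of _ _ "{}"]) (use finG D2disj sub in \<open>auto simp: D2_def\<close>)
    then show ?thesis by simp
  qed
  show ?thesis
  proof (cases "card D2 \<le> 1")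
    case True
    show ?thesis
    proof (cases "card D2 = 0")
      case True
      then show ?thesis using swap sumb bnd L1 cardF by simp
    next
      case False
      then have "D2 \<noteq> {}" by auto
      then have "L = {}" using L0 by blast
      then show ?thesis using swap sumb bnd cardF \<open>card D2 \<le> 1\<close> by simp
    qed
  next
    case False
    then have "D2 \<noteq> {}" by auto
    then have Le: "L = {}" using L0 by blast
    from False obtain p q where p: "p \<in> D2" and q: "q \<in> D2" and pq: "p \<noteq> q"
      by (metis card_le_Suc0_iff_eq finG(3) One_nat_def)
    have cp: "card p = 2" "card q = 2" using p q by (auto simp: D2_def)
    obtain i where i: "i \<in> p" using cp by fastforce
    obtain j where j: "j \<in> q" using cp by fastforce
    have disj: "p \<inter> q = {}" using D2disj p q pq by blast
    have ij: "i \<noteq> j" using i j disj by blast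
    define e0 where "e0 = {i, j}"
    have e0E: "e0 \<in> E" using i j p q sub ij by (auto simp: e0_def E_def D2_def)
    have e0F: "e0 \<notin> F"
    proof
      assume e0: "e0 \<in> F"
      have "e0 \<noteq> p" using j disj by (auto simp: e0_def)
      moreover have "p \<in> F" using p by (auto simp: D2_def)
      ultimately have "2 * card (e0 \<inter> p) + 4 \<le> card e0 + card p" using inter e0 by blast
      moreover have "1 \<le> card (e0 \<inter> p)" using i finc p
        by (metis D2_def Int_iff card_0_eq empty_iff insertI1 e0_def finite_Int less_one not_le mem_Collect_eq)
      ultimately show False using cp ij by (simp add: e0_def)
    qed
    have cpq: "card (p \<union> q) = 4" using disj cp finc p q card_Un_disjoint
      by (metis D2_def add_2_eq_Suc' mem_Collect_eq numeral_Bit0 numeral_One one_plus_numeral)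
    have R5: "card ({..<9} - (p \<union> q)) = 5"
    proof -
      have "p \<union> q \<subseteq> {..<9}" using sub p q by (auto simp: D2_def)
      then show ?thesis using cpq card_Diff_subset[OF finite_subset[OF \<open>p \<union> q \<subseteq> {..<9}\<close>] \<open>p \<union> q \<subseteq> {..<9}\<close>] by simp
    qed
    have ve0: "v e0 \<le> 2"
    proof -
      have "v e0 \<le> max 2 (card ({..<9} - (p \<union> q)) div 2)"
      proof (rule VG[OF e0E e0F])
        fix c assume c: "c \<in> G" "e0 \<subseteq> c" "card c = 4"
        have avoid: "c \<inter> r \<subseteq> e0" if r: "r \<in> D2" "k \<in> r" "k \<in> e0" for r k
        proof
          fix z assume z: "z \<in> c \<inter> r"
          show "z \<in> e0"
          proof (rule ccontr)
            assume "z \<notin> e0"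
            then have "z \<noteq> k" using r by auto
            have "c \<noteq> r" using c r by (auto simp: D2_def)
            moreover have "c \<in> F" "r \<in> F" using c r by (auto simp: G_def D2_def)
            ultimately have "2 * card (c \<inter> r) + 4 \<le> card c + card r" using inter by blast
            moreover have "card {z, k} \<le> card (c \<inter> r)"
              using z r c \<open>z \<noteq> k\<close> finc by (intro card_mono) (auto simp: G_def)
            ultimately show False using c r \<open>z \<noteq> k\<close> by (simp add: D2_def)
          qed
        qed
        have "c \<inter> p \<subseteq> e0" using avoid[OF p i] by (simp add: e0_def)
        moreover have "c \<inter> q \<subseteq> e0" using avoid[OF q j] by (simp add: e0_def)
        moreover have "c \<subseteq> {..<9}" using c sub by (auto simp: G_def)
        ultimately show "c - e0 \<subseteq> {..<9} - (p \<union> q)" by blast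
      qed simp
      then show ?thesis using R5 by simp
    qed
    have s1: "(\<Sum>e\<in>E. v e) = v e0 + (\<Sum>e\<in>E - {e0}. v e)" using sum.remove[OF finE e0E] by simp
    have s2: "(\<Sum>e\<in>E - {e0}. v e) \<le> (\<Sum>e\<in>E - {e0}. (if e \<in> F then 6 else 3))"
      by (rule sum_mono) (use V1 V2 in auto)
    have s3: "(\<Sum>e\<in>E. (if e \<in> F then 6 else (3::nat))) = 3 + (\<Sum>e\<in>E - {e0}. (if e \<in> F then 6 else 3))"
      using sum.remove[OF finE e0E, of "\<lambda>e. if e \<in> F then 6 else (3::nat)"] e0F by simp
    have "(\<Sum>e\<in>E. v e) + 1 \<le> 108 + 3 * card D2" using s1 s2 s3 ve0 bnd by linarith
    moreover have "card D2 \<le> 4" using a2 by presburger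
    ultimately have "6 * card G \<le> 119" using swap by linarith
    then show ?thesis using cardF Le by simp
  qed
qed


definition good :: "nat \<Rightarrow> (nat \<Rightarrow> bool) set \<Rightarrow> bool" where
  "good n S \<longleftrightarrow> S \<subseteq> F2vec n \<and> (\<forall>x\<in>S. \<forall>y\<in>S. x \<noteq> y \<longrightarrow> 4 \<le> hamming_dist n x y)"

lemma finite_F2vec: "finite (F2vec n)"
proof (rule finite_subset)
  show "F2vec n \<subseteq> (\<lambda>A i. i \<in> A) ` Pow {..<n}"
  proof
    fix x assume x: "x \<in> F2vec n"
    have "x = (\<lambda>i. i \<in> {i. x i})" by simp
    moreover have "{i. x i} \<subseteq> {..<n}"
    proof
      fix i assume "i \<in> {i. x i}"
      then show "i \<in> {..<n}" using x unfolding F2vec_def by (cases "i < n") auto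
    qed
    ultimately show "x \<in> (\<lambda>A i. i \<in> A) ` Pow {..<n}" by blast
  qed
  show "finite ((\<lambda>A i. i \<in> A) ` Pow {..<n})" by simp
qed

lemma card_lt_sum: "card {i. i < (n::nat) \<and> P i} = (\<Sum>i<n. if P i then 1 else 0)"
proof -
  have "{i. i < n \<and> P i} = {..<n} \<inter> {i. P i}" by auto
  then have "card {i. i < n \<and> P i} = (\<Sum>i\<in>{..<n} \<inter> {i. P i}. 1)" by simp
  also have "\<dots> = (\<Sum>i<n. if P i then 1 else 0)"
    by (subst sum.inter_restrict) auto
  finally show ?thesis .
qed

lemma hd_sum: "hamming_dist n x y = (\<Sum>i<n. if x i \<noteq> y i then 1 else 0)"
  unfolding hamming_dist_def by (rule card_lt_sum)

lemma hd_le: "hamming_dist n x y \<le> n"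
proof -
  have "hamming_dist n x y \<le> card {..<n}"
    unfolding hamming_dist_def by (rule card_mono) auto
  then show ?thesis by simp
qed

lemma good_finite: "good n S \<Longrightarrow> finite S"
  using finite_F2vec finite_subset good_def by blast

lemma small1: assumes "good n S" "n \<le> 3" shows "card S \<le> 1"
proof -
  have "\<forall>a\<in>S. \<forall>b\<in>S. a = b"
  proof (intro ballI, rule ccontr)
    fix a b assume "a \<in> S" "b \<in> S" "a \<noteq> b"
    then have "4 \<le> hamming_dist n a b" using assms by (auto simp: good_def)
    then show False using hd_le[of n a b] assms by simp
  qed
  then show ?thesis using card_le_Suc0_iff_eq good_finite[OF assms(1)] by auto
qed

lemma triple: "hamming_dist n x y + hamming_dist n y z + hamming_dist n x z \<le> 2 * n"
proof -
  have "hamming_dist n x y + hamming_dist n y z + hamming_dist n x z =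
    (\<Sum>i<n. (if x i \<noteq> y i then 1 else 0) + (if y i \<noteq> z i then 1 else 0) + (if x i \<noteq> z i then 1 else 0))"
    by (simp add: hd_sum sum.distrib)
  also have "\<dots> \<le> (\<Sum>i<n. 2)" by (rule sum_mono) auto
  finally show ?thesis by simp
qed

lemma small2: assumes "good n S" "n \<le> 5" shows "card S \<le> 2"
proof (rule ccontr)
  assume "\<not> card S \<le> 2"
  have fin: "finite S" using good_finite[OF assms(1)] .
  have "S \<noteq> {}" using \<open>\<not> card S \<le> 2\<close> by auto
  then obtain x where x: "x \<in> S" by blast
  have c1: "card (S - {x}) \<ge> 2" using x fin \<open>\<not> card S \<le> 2\<close> by simp
  have "S - {x} \<noteq> {}" by (metis c1 card.empty not_numeral_le_zero)
  then obtain y where y: "y \<in> S - {x}" by blast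
  have c2: "card (S - {x} - {y}) \<ge> 1" using y fin c1 by simp
  have "S - {x} - {y} \<noteq> {}" by (metis c2 card.empty not_one_le_zero)
  then obtain z where z: "z \<in> S - {x} - {y}" by blast
  have "4 \<le> hamming_dist n x y" "4 \<le> hamming_dist n y z" "4 \<le> hamming_dist n x z"
    using assms(1) x y z by (auto simp: good_def)
  then show False using triple[of n x y z] assms(2) by simp
qed

lemma hd_Suc: "hamming_dist (Suc n) x y = hamming_dist n x y + (if x n \<noteq> y n then 1 else 0)"
  by (simp add: hd_sum)

lemma shorten:
  assumes S: "good (Suc n) S" and B: "\<And>T. good n T \<Longrightarrow> card T \<le> B"
  shows "card S \<le> 2 * B"
proof -
  have fin: "finite S" using good_finite[OF S] .
  define S0 where "S0 = {x\<in>S. \<not> x n}"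
  define S1 where "S1 = {x\<in>S. x n}"
  define f :: "(nat \<Rightarrow> bool) \<Rightarrow> (nat \<Rightarrow> bool)" where "f x = x(n := False)" for x
  have F: "x \<in> F2vec n" if "x \<in> F2vec (Suc n)" "\<not> x n" for x
  proof -
    have "\<not> x i" if "n \<le> i" for i
    proof (cases "i = n")
      case False
      then have "Suc n \<le> i" using that by simp
      then show ?thesis using \<open>x \<in> F2vec (Suc n)\<close> by (simp add: F2vec_def)
    qed (use \<open>\<not> x n\<close> in simp)
    then show ?thesis by (simp add: F2vec_def)
  qed
  have SS: "S \<subseteq> F2vec (Suc n)" and Sd: "\<And>x y. x \<in> S \<Longrightarrow> y \<in> S \<Longrightarrow> x \<noteq> y \<Longrightarrow> 4 \<le> hamming_dist (Suc n) x y"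
    using S unfolding good_def by blast+
  have g0: "good n S0"
    unfolding good_def
  proof (intro conjI ballI impI subsetI)
    fix x assume "x \<in> S0"
    then have "x \<in> S" "\<not> x n" by (simp_all add: S0_def)
    then show "x \<in> F2vec n" using SS F by blast
  next
    fix x y assume x: "x \<in> S0" and y: "y \<in> S0" and "x \<noteq> y"
    then have "4 \<le> hamming_dist (Suc n) x y" using Sd by (simp add: S0_def)
    moreover have "x n = y n" using x y by (simp add: S0_def)
    ultimately show "4 \<le> hamming_dist n x y" using hd_Suc[of n x y] by simp
  qed
  have hdf: "hamming_dist n (f x) (f y) = hamming_dist n x y" for x y
    unfolding hd_sum f_def by (rule sum.cong) auto
  have injf: "inj_on f S1"
  proof
    fix x y assume "x \<in> S1" "y \<in> S1" "f x = f y"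
    then have "(f x)(n := True) = (f y)(n := True)" by simp
    moreover have "(f x)(n := True) = x" "(f y)(n := True) = y"
      using \<open>x \<in> S1\<close> \<open>y \<in> S1\<close> by (auto simp: f_def S1_def fun_eq_iff)
    ultimately show "x = y" by simp
  qed
  have g1: "good n (f ` S1)"
    unfolding good_def
  proof (intro conjI ballI impI subsetI)
    fix a assume "a \<in> f ` S1"
    then obtain x where x: "x \<in> S1" "a = f x" by blast
    have xF: "x \<in> F2vec (Suc n)" using x SS by (simp add: S1_def subset_iff)
    have "f x \<in> F2vec (Suc n)" unfolding F2vec_def
    proof (intro CollectI allI impI)
      fix i assume "Suc n \<le> i"
      then show "\<not> f x i" using xF by (simp add: f_def F2vec_def)
    qed
    moreover have "\<not> f x n" by (simp add: f_def)
    ultimately show "a \<in> F2vec n" using F x by blast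
  next
    fix a b assume "a \<in> f ` S1" "b \<in> f ` S1" "a \<noteq> b"
    then obtain x y where xy: "x \<in> S1" "y \<in> S1" "a = f x" "b = f y" by blast
    then have "x \<noteq> y" using \<open>a \<noteq> b\<close> by blast
    then have "4 \<le> hamming_dist (Suc n) x y" using Sd xy by (simp add: S1_def)
    moreover have "x n = y n" using xy by (simp add: S1_def)
    ultimately show "4 \<le> hamming_dist n a b" using xy hdf hd_Suc[of n x y] by simp
  qed
  have "card S = card S0 + card S1"
  proof -
    have "S = S0 \<union> S1" "S0 \<inter> S1 = {}" by (auto simp: S0_def S1_def)
    then show ?thesis using fin card_Un_disjoint by (metis finite_Un)
  qed
  moreover have "card S0 \<le> B" using B g0 by blast
  moreover have "card S1 \<le> B" using B[OF g1] card_image[OF injf] by simp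
  ultimately show ?thesis by simp
qed

lemma bound6: "good 6 S \<Longrightarrow> card S \<le> 4"
  using shorten[of 5 S 2] small2 by (simp add: numeral_eq_Suc)

lemma bound7: "good 7 S \<Longrightarrow> card S \<le> 8"
  using shorten[of 6 S 4] bound6 by (simp add: numeral_eq_Suc)

lemma bound9:
  assumes "admissible_code 9 4 4 S" shows "card S \<le> 19"
proof -
  define s :: "(nat \<Rightarrow> bool) \<Rightarrow> nat set" where "s x = {i. x i}" for x
  have inj: "inj_on s S"
  proof
    fix x y assume "s x = s y"
    then show "x = y" by (auto simp: s_def fun_eq_iff)
  qed
  have SF: "S \<subseteq> F2vec 9" using assms by (simp add: admissible_code_def)
  have sub: "s x \<subseteq> {..<9}" if "x \<in> S" for x
  proof
    fix i assume "i \<in> s x"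
    then show "i \<in> {..<9}" using SF that unfolding s_def F2vec_def by (cases "i < 9") auto
  qed
  have wt: "hamming_weight 9 x = card (s x)" if "x \<in> S" for x
  proof -
    have "{i. i < 9 \<and> x i} = s x" using sub[OF that] by (auto simp: s_def)
    then show ?thesis by (simp add: hamming_weight_def)
  qed
  have hd: "hamming_dist 9 x y = card ((s x - s y) \<union> (s y - s x))" if "x \<in> S" "y \<in> S" for x y
  proof -
    have "{i. i < 9 \<and> x i \<noteq> y i} = (s x - s y) \<union> (s y - s x)"
      using sub[OF that(1)] sub[OF that(2)] by (auto simp: s_def)
    then show ?thesis by (simp add: hamming_dist_def)
  qed
  have "card (s ` S) \<le> 19"
  proof (rule pack9)
    show "\<forall>c\<in>s ` S. c \<subseteq> {..<9}" using sub by blast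
    show "\<forall>c\<in>s ` S. card c \<le> 4" using assms wt by (auto simp: admissible_code_def)
    show "\<forall>c\<in>s ` S. \<forall>d\<in>s ` S. c \<noteq> d \<longrightarrow> 4 \<le> card (c - d \<union> (d - c))"
    proof (intro ballI impI)
      fix c d assume "c \<in> s ` S" "d \<in> s ` S" "c \<noteq> d"
      then obtain x y where "x \<in> S" "y \<in> S" "c = s x" "d = s y" "x \<noteq> y" by blast
      then show "4 \<le> card (c - d \<union> (d - c))" using assms hd by (auto simp: admissible_code_def)
    qed
  qed
  then show ?thesis using card_image[OF inj] by simp
qed




definition vec :: "nat list \<Rightarrow> nat \<Rightarrow> bool" where "vec xs = (\<lambda>i. i \<in> set xs)"

lemma card_filter_upt: "card {i. i < (n::nat) \<and> P i} = length (filter P [0..<n])"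
proof -
  have "{i. i < n \<and> P i} = set (filter P [0..<n])" by auto
  then show ?thesis using distinct_card[of "filter P [0..<n]"] by simp
qed

lemma witness:
  assumes ne: "L \<noteq> []" and rng: "\<forall>xs\<in>set L. \<forall>i\<in>set xs. i < n"
    and wt: "\<forall>xs\<in>set L. length (filter (\<lambda>i. i \<in> set xs) [0..<n]) \<le> 4"
    and ds: "\<forall>i\<in>set [0..<length L]. \<forall>j\<in>set [0..<length L]. i \<noteq> j \<longrightarrow>
       4 \<le> length (filter (\<lambda>k. (k \<in> set (L!i)) \<noteq> (k \<in> set (L!j))) [0..<n])"
  shows "admissible_code n 4 4 (set (map vec L)) \<and> card (set (map vec L)) = length L"
proof -
  have hd: "hamming_dist n (vec xs) (vec ys) = length (filter (\<lambda>k. (k \<in> set xs) \<noteq> (k \<in> set ys)) [0..<n])" for xs ys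
    unfolding hamming_dist_def vec_def by (rule card_filter_upt)
  have hw: "hamming_weight n (vec xs) = length (filter (\<lambda>i. i \<in> set xs) [0..<n])" for xs
    unfolding hamming_weight_def vec_def by (rule card_filter_upt)
  have dij: "4 \<le> hamming_dist n (vec (L!i)) (vec (L!j))" if "i < length L" "j < length L" "i \<noteq> j" for i j
    using ds that hd by simp
  have dist: "distinct (map vec L)"
  proof (subst distinct_conv_nth, intro allI impI)
    fix i j assume "i < length (map vec L)" "j < length (map vec L)" "i \<noteq> j"
    then have "4 \<le> hamming_dist n (vec (L!i)) (vec (L!j))" using dij by simp
    then show "map vec L ! i \<noteq> map vec L ! j" using \<open>i < length (map vec L)\<close> \<open>j < length (map vec L)\<close>
      by (auto simp: hamming_dist_def)
  qed
  have "admissible_code n 4 4 (set (map vec L))"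
    unfolding admissible_code_def
  proof (intro conjI ballI impI subsetI)
    show "set (map vec L) \<noteq> {}" using ne by simp
  next
    fix x assume "x \<in> set (map vec L)"
    then obtain xs where "xs \<in> set L" "x = vec xs" by auto
    moreover have "\<forall>i\<in>set xs. i < n" using rng \<open>xs \<in> set L\<close> by blast
    ultimately show "x \<in> F2vec n" unfolding F2vec_def vec_def using leD by blast
  next
    fix x assume "x \<in> set (map vec L)"
    then obtain xs where "xs \<in> set L" "x = vec xs" by auto
    then show "hamming_weight n x \<le> 4" using wt hw by simp
  next
    fix x y assume "x \<in> set (map vec L)" "y \<in> set (map vec L)" "x \<noteq> y"
    then obtain i j where "i < length L" "j < length L" "x = vec (L!i)" "y = vec (L!j)"
      by (auto simp: in_set_conv_nth)
    then show "4 \<le> hamming_dist n x y" using dij \<open>x \<noteq> y\<close> by blast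
  qed
  then show ?thesis using dist distinct_card[OF dist] by simp
qed

lemma A'_eqI:
  assumes "admissible_code n 4 4 S0" "card S0 = k" "\<And>S. admissible_code n 4 4 S \<Longrightarrow> card S \<le> k"
  shows "A' n 4 4 = k"
  unfolding A'_def
proof (rule Max_eqI)
  show "finite {card S |S. admissible_code n 4 4 S}"
    by (rule finite_subset[of _ "{..k}"]) (use assms(3) in auto)
qed (use assms in auto)

lemma good_adm: "admissible_code n 4 4 S \<Longrightarrow> good n S"
  by (simp add: admissible_code_def good_def)

definition L9 :: "nat list list" where "L9 = [[], [0, 1, 2, 3], [0, 1, 4, 5], [0, 1, 6, 7], [0, 2, 4, 6], [0, 2, 5, 8], [0, 3, 5, 7], [0, 3, 6, 8], [0, 4, 7, 8], [1, 2, 4, 7], [1, 2, 6, 8], [1, 3, 4, 8], [1, 3, 5, 6], [1, 5, 7, 8], [2, 3, 4, 5], [2, 3, 7, 8], [2, 5, 6, 7], [3, 4, 6, 7], [4, 5, 6, 8]]"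
definition L7 :: "nat list list" where "L7 = [[], [2,4,5,6], [0,3,5,6], [0,1,4,6], [0,1,2,5], [1,2,3,6], [0,2,3,4], [1,3,4,5]]"
definition L6 :: "nat list list" where "L6 = [[], [0,1,2,3], [0,1,4,5], [2,3,4,5]]"
definition L4 :: "nat list list" where "L4 = [[], [0,1,2,3]]"

lemma w9: "admissible_code 9 4 4 (set (map vec L9)) \<and> card (set (map vec L9)) = 19"
proof -
  have "admissible_code 9 4 4 (set (map vec L9)) \<and> card (set (map vec L9)) = length L9"
    by (rule witness) (simp_all add: L9_def upt_rec)
  then show ?thesis by (simp add: L9_def)
qed

lemma w7: "admissible_code 7 4 4 (set (map vec L7)) \<and> card (set (map vec L7)) = 8"
proof -
  have "admissible_code 7 4 4 (set (map vec L7)) \<and> card (set (map vec L7)) = length L7"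
    by (rule witness) (simp_all add: L7_def upt_rec)
  then show ?thesis by (simp add: L7_def)
qed

lemma w6: "admissible_code 6 4 4 (set (map vec L6)) \<and> card (set (map vec L6)) = 4"
proof -
  have "admissible_code 6 4 4 (set (map vec L6)) \<and> card (set (map vec L6)) = length L6"
    by (rule witness) (simp_all add: L6_def upt_rec)
  then show ?thesis by (simp add: L6_def)
qed

lemma w4: "admissible_code 4 4 4 (set (map vec L4)) \<and> card (set (map vec L4)) = 2"
proof -
  have "admissible_code 4 4 4 (set (map vec L4)) \<and> card (set (map vec L4)) = length L4"
    by (rule witness) (simp_all add: L4_def upt_rec)
  then show ?thesis by (simp add: L4_def)
qed

lemma w5: "admissible_code 5 4 4 (set (map vec L4)) \<and> card (set (map vec L4)) = 2"
proof -
  have "admissible_code 5 4 4 (set (map vec L4)) \<and> card (set (map vec L4)) = length L4"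
    by (rule witness) (simp_all add: L4_def upt_rec)
  then show ?thesis by (simp add: L4_def)
qed

lemma w1: "admissible_code n 4 4 {vec []} \<and> card {vec []} = 1"
proof -
  have "admissible_code n 4 4 (set (map vec [[]])) \<and> card (set (map vec [[]])) = length [[]::nat list]"
    by (rule witness) simp_all
  then show ?thesis by simp
qed

theorem proposition8:
  shows "(\<forall>n::nat. 1 \<le> n \<and> n \<le> 3 \<longrightarrow> A' n 4 4 = 1)
    \<and> A' 4 4 4 = 2 \<and> A' 5 4 4 = 2 \<and> A' 6 4 4 = 4
    \<and> A' 7 4 4 = 8 \<and> A' 9 4 4 = 19"
proof (intro conjI allI impI)
  fix n :: nat assume "1 \<le> n \<and> n \<le> 3"
  then have n3: "n \<le> 3" by simp
  show "A' n 4 4 = 1"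
  proof (rule A'_eqI[of n "{vec []}"])
    show "admissible_code n 4 4 {vec []}" "card {vec []} = 1" using w1[of n] by simp_all
  next
    fix S assume "admissible_code n 4 4 S"
    then show "card S \<le> 1" using small1[OF good_adm n3] by blast
  qed
next
  show "A' 4 4 4 = 2" using w4 by (intro A'_eqI[of 4 "set (map vec L4)"]) (auto intro: small2 good_adm)
next
  show "A' 5 4 4 = 2" using w5 by (intro A'_eqI[of 5 "set (map vec L4)"]) (auto intro: small2 good_adm)
next
  show "A' 6 4 4 = 4" using w6 by (intro A'_eqI[of 6 "set (map vec L6)"]) (auto intro: bound6 good_adm)
next
  show "A' 7 4 4 = 8" using w7 by (intro A'_eqI[of 7 "set (map vec L7)"]) (auto intro: bound7 good_adm)
next
  show "A' 9 4 4 = 19" using w9 by (intro A'_eqI[of 9 "set (map vec L9)"]) (auto intro: bound9)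
qed


end
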